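(* Let $E\in M_n(\mathbb{FT})$ be an idempotent of rank $n$, let $A$ be an element of the $\mathcal H$-class of $E$ in $M_n(\mathbb{FT})$, and let $\widehat{\phi_A}:\mathcal{P}C(E)\to\mathcal{P}C(E)$ be the map induced on the projectivisation of $C(E)$ by left multiplication $x\mapsto A\otimes x$. Then, identifying projective space with $\mathbb{R}^{n-1}$ via $(x_1,\dots,x_n)\mapsto(x_1-x_n,\dots,x_{n-1}-x_n)$, the map $\widehat{\phi_A}$ is the restriction to $\mathcal{P}C(E)\subseteq\mathbb{R}^{n-1}$ of a classical affine linear map.
   Context: $\mathbb{FT}$ is $\mathbb{R}$ with $a\oplus b=\max(a,b)$, $a\otimes b=a+b$; $M_n(\mathbb{FT})$ is the semigroup of real $n\times n$ matrices under $(A\otimes B)_{i,j}=\max_k(A_{i,k}+B_{k,j})$, acting on $\mathbb{FT}^n$ similarly. $C(E)$ is the set of finite componentwise maxima of columns of $E$ shifted by real constants; the rank of an idempotent $E$ is the minimal cardinality of a generating set of $C(E)$. Projective tropical $(n-1)$-space is $\mathbb{R}^n$ modulo $x\sim y$ iff $y=x+\lambda(1,\dots,1)$ for some $\lambda\in\mathbb{R}$; $\mathcal{P}C(E)$ is the image of $C(E)$ there. Green's relations: $a\,\mathcal{R}\,b$ iff $aS^1=bS^1$, $a\,\mathcal{L}\,b$ iff $S^1a=S^1b$, $\mathcal{H}=\mathcal{L}\cap\mathcal{R}$. *)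

theory Defs
  imports Complex_Main
begin

text \<open>Tropical (max-plus) n x n matrices and n-vectors, represented as functions on
  natural-number indices, normalised to 0 outside the index range 0..n-1.\<close>

definition tmats :: "nat \<Rightarrow> (nat \<Rightarrow> nat \<Rightarrow> real) set" where
  "tmats n = {M. \<forall>i j. \<not> (i < n \<and> j < n) \<longrightarrow> M i j = 0}"

definition tvecs :: "nat \<Rightarrow> (nat \<Rightarrow> real) set" where
  "tvecs n = {x. \<forall>i. n \<le> i \<longrightarrow> x i = 0}"

definition tmul :: "nat \<Rightarrow> (nat \<Rightarrow> nat \<Rightarrow> real) \<Rightarrow> (nat \<Rightarrow> nat \<Rightarrow> real) \<Rightarrow> (nat \<Rightarrow> nat \<Rightarrow> real)" where
  "tmul n A B = (\<lambda>i j. if i < n \<and> j < n then Max {A i k + B k j | k. k < n} else 0)"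

definition tact :: "nat \<Rightarrow> (nat \<Rightarrow> nat \<Rightarrow> real) \<Rightarrow> (nat \<Rightarrow> real) \<Rightarrow> (nat \<Rightarrow> real)" where
  "tact n A x = (\<lambda>i. if i < n then Max {A i k + x k | k. k < n} else 0)"

definition tidempotent :: "nat \<Rightarrow> (nat \<Rightarrow> nat \<Rightarrow> real) \<Rightarrow> bool" where
  "tidempotent n E \<longleftrightarrow> E \<in> tmats n \<and> tmul n E E = E"

definition tspan :: "nat \<Rightarrow> (nat \<Rightarrow> real) set \<Rightarrow> (nat \<Rightarrow> real) set" where
  "tspan n G = {x \<in> tvecs n. \<exists>S c. finite S \<and> S \<noteq> {} \<and> S \<subseteq> G \<and>
      (\<forall>i<n. x i = Max {c g + g i | g. g \<in> S})}"

definition tcol :: "nat \<Rightarrow> (nat \<Rightarrow> nat \<Rightarrow> real) \<Rightarrow> nat \<Rightarrow> (nat \<Rightarrow> real)" where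
  "tcol n E j = (\<lambda>i. if i < n then E i j else 0)"

definition colspace :: "nat \<Rightarrow> (nat \<Rightarrow> nat \<Rightarrow> real) \<Rightarrow> (nat \<Rightarrow> real) set" where
  "colspace n E = tspan n (tcol n E ` {..<n})"

definition trank :: "nat \<Rightarrow> (nat \<Rightarrow> nat \<Rightarrow> real) \<Rightarrow> nat" where
  "trank n E = (LEAST k. \<exists>G. finite G \<and> card G = k \<and> G \<subseteq> tvecs n \<and> tspan n G = colspace n E)"

text \<open>Green's relations in the semigroup S = M_n(FT), with S^1 = S plus adjoined identity.\<close>
definition right_ideal1 :: "nat \<Rightarrow> (nat \<Rightarrow> nat \<Rightarrow> real) \<Rightarrow> (nat \<Rightarrow> nat \<Rightarrow> real) set" where
  "right_ideal1 n a = insert a ((\<lambda>s. tmul n a s) ` tmats n)"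

definition left_ideal1 :: "nat \<Rightarrow> (nat \<Rightarrow> nat \<Rightarrow> real) \<Rightarrow> (nat \<Rightarrow> nat \<Rightarrow> real) set" where
  "left_ideal1 n a = insert a ((\<lambda>s. tmul n s a) ` tmats n)"

definition greenR :: "nat \<Rightarrow> (nat \<Rightarrow> nat \<Rightarrow> real) \<Rightarrow> (nat \<Rightarrow> nat \<Rightarrow> real) \<Rightarrow> bool" where
  "greenR n a b \<longleftrightarrow> right_ideal1 n a = right_ideal1 n b"

definition greenL :: "nat \<Rightarrow> (nat \<Rightarrow> nat \<Rightarrow> real) \<Rightarrow> (nat \<Rightarrow> nat \<Rightarrow> real) \<Rightarrow> bool" where
  "greenL n a b \<longleftrightarrow> left_ideal1 n a = left_ideal1 n b"

definition greenH :: "nat \<Rightarrow> (nat \<Rightarrow> nat \<Rightarrow> real) \<Rightarrow> (nat \<Rightarrow> nat \<Rightarrow> real) \<Rightarrow> bool" where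
  "greenH n a b \<longleftrightarrow> greenL n a b \<and> greenR n a b"

definition projcoord :: "nat \<Rightarrow> (nat \<Rightarrow> real) \<Rightarrow> (nat \<Rightarrow> real)" where
  "projcoord n x = (\<lambda>i. if i < n - 1 then x i - x (n - 1) else 0)"

end

theory Submission
  imports Defs
begin

lemma set_lt_image[simp]: "{f k | k. k < (n::nat)} = f ` {..<n}" by (auto simp: image_def)

lemma set_in_image[simp]: "{f k | k. k \<in> S} = f ` S" by blast

lemma tspan_mono: assumes "G \<subseteq> H" shows "tspan n G \<subseteq> tspan n H"
proof
  fix x assume "x \<in> tspan n G"
  then obtain S c where "x \<in> tvecs n" "finite S" "S \<noteq> {}" "S \<subseteq> G" "\<forall>i<n. x i = Max ((\<lambda>g. c g + g i) ` S)"
    unfolding tspan_def by auto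
  then show "x \<in> tspan n H" unfolding tspan_def using assms
    by (intro CollectI conjI exI[of _ S] exI[of _ c]) auto
qed

lemma tspan_gen: assumes "g \<in> tvecs n" "g \<in> G" shows "g \<in> tspan n G"
  unfolding tspan_def using assms
  by (intro CollectI conjI exI[of _ "{g}"] exI[of _ "\<lambda>_. 0"]) auto

lemma tspan_trans: assumes "x \<in> tspan n (tspan n G)" shows "x \<in> tspan n G"
proof -
  from assms obtain S c where x: "x \<in> tvecs n" "finite S" "S \<noteq> {}" "S \<subseteq> tspan n G"
    "\<forall>i<n. x i = Max {c h + h i | h. h \<in> S}" unfolding tspan_def by blast
  have "\<forall>h\<in>S. \<exists>T d. finite T \<and> T \<noteq> {} \<and> T \<subseteq> G \<and> (\<forall>i<n. h i = Max {d g + g i | g. g \<in> T})"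
    using x(4) unfolding tspan_def by auto
  then obtain T where "\<forall>h\<in>S. \<exists>d. finite (T h) \<and> T h \<noteq> {} \<and> T h \<subseteq> G \<and> (\<forall>i<n. h i = Max {d g + g i | g. g \<in> T h})"
    by (rule bchoice[elim_format]) blast
  then obtain d where "\<forall>h\<in>S. finite (T h) \<and> T h \<noteq> {} \<and> T h \<subseteq> G \<and> (\<forall>i<n. h i = Max {d h g + g i | g. g \<in> T h})"
    by (rule bchoice[elim_format]) blast
  hence T: "\<And>h. h\<in>S \<Longrightarrow> finite (T h) \<and> T h \<noteq> {} \<and> T h \<subseteq> G \<and> (\<forall>i<n. h i = Max {d h g + g i | g. g \<in> T h})" by blast
  define U where "U = (\<Union>h\<in>S. T h)"
  define e where "e g = Max ((\<lambda>h. c h + d h g) ` {h\<in>S. g \<in> T h})" for g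
  have U: "finite U" "U \<noteq> {}" "U \<subseteq> G" using T x(2,3) unfolding U_def by auto
  have ein: "\<exists>h\<in>S. g \<in> T h \<and> e g = c h + d h g" if "g \<in> U" for g
  proof -
    have "finite {h\<in>S. g \<in> T h}" "{h\<in>S. g \<in> T h} \<noteq> {}" using x(2) that U_def by auto
    from Max_in[OF finite_imageI[OF this(1)]] this(2) show ?thesis unfolding e_def by auto
  qed
  have ege: "c h + d h g \<le> e g" if "h \<in> S" "g \<in> T h" for h g
    unfolding e_def using x(2) that by (intro Max_ge) auto
  have "\<forall>i<n. x i = Max {e g + g i | g. g \<in> U}"
  proof (intro allI impI)
    fix i assume i: "i < n"
    have ub: "\<forall>g\<in>U. e g + g i \<le> x i"
    proof
      fix g assume g: "g \<in> U"
      then obtain h where h: "h \<in> S" "g \<in> T h" "e g = c h + d h g" using ein by blast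
      have "d h g + g i \<le> h i" using T[OF h(1)] h(2) i by (auto intro!: Max_ge)
      moreover have "c h + h i \<le> x i" using x(5) x(2) h(1) i by (auto intro!: Max_ge)
      ultimately show "e g + g i \<le> x i" using h(3) by linarith
    qed
    have "x i \<in> (\<lambda>h. c h + h i) ` S" using x(5) x(2,3) i Max_in[of "(\<lambda>h. c h + h i) ` S"] by auto
    then obtain h where h: "h \<in> S" "x i = c h + h i" by auto
    have "h i \<in> (\<lambda>g. d h g + g i) ` T h" using T[OF h(1)] i Max_in[of "(\<lambda>g. d h g + g i) ` T h"] by auto
    then obtain g where g: "g \<in> T h" "h i = d h g + g i" by auto
    have gU: "g \<in> U" using h g unfolding U_def by auto
    have "x i \<le> e g + g i" using ege[OF h(1) g(1)] h(2) g(2) by linarith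
    hence "e g + g i = x i" using ub gU by force
    have "Max ((\<lambda>g. e g + g i) ` U) = x i"
      by (rule Max_eqI) (use ub gU U \<open>e g + g i = x i\<close> in \<open>auto intro!: image_eqI[where x=g]\<close>)
    thus "x i = Max {e g + g i | g. g \<in> U}" by simp
  qed
  thus ?thesis unfolding tspan_def using x(1) U
    by (intro CollectI conjI exI[of _ U] exI[of _ e]) auto
qed


lemma idx_span:
  assumes "finite K" "K \<noteq> {}" "K \<subseteq> {..<n}" "x \<in> tvecs n"
    and xe: "\<And>i. i<n \<Longrightarrow> x i = Max ((\<lambda>k. c k + E i k) ` K)"
  shows "x \<in> tspan n (tcol n E ` K)"
proof -
  define S where "S = tcol n E ` K"
  define c' where "c' g = Max (c ` {k\<in>K. tcol n E k = g})" for g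
  have S: "finite S" "S \<noteq> {}" using assms unfolding S_def by auto
  have c'in: "\<exists>k\<in>K. tcol n E k = g \<and> c' g = c k" if "g \<in> S" for g
  proof -
    have "finite {k\<in>K. tcol n E k = g}" "{k\<in>K. tcol n E k = g} \<noteq> {}" using assms(1) that S_def by auto
    from Max_in[OF finite_imageI[OF this(1)]] this(2) show ?thesis unfolding c'_def by auto
  qed
  have c'ge: "c k \<le> c' (tcol n E k)" if "k\<in>K" for k
    unfolding c'_def using assms(1) that by (intro Max_ge) auto
  have "\<forall>i<n. x i = Max ((\<lambda>g. c' g + g i) ` S)"
  proof (intro allI impI)
    fix i assume i: "i<n"
    have ub: "\<forall>g\<in>S. c' g + g i \<le> x i"
    proof
      fix g assume "g\<in>S"
      then obtain k where k: "k\<in>K" "tcol n E k = g" "c' g = c k" using c'in by blast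
      have "g i = E i k" using k(2) i unfolding tcol_def by auto
      moreover have "c k + E i k \<le> Max ((\<lambda>k. c k + E i k) ` K)"
        by (rule Max_ge) (use assms(1) k(1) in auto)
      ultimately show "c' g + g i \<le> x i" using k(3) xe[OF i] by simp
    qed
    have "x i \<in> (\<lambda>k. c k + E i k) ` K" using xe[OF i] Max_in[of "(\<lambda>k. c k + E i k) ` K"] assms(1,2) by auto
    then obtain k where k: "k\<in>K" "x i = c k + E i k" by auto
    define g where "g = tcol n E k"
    have gS: "g \<in> S" unfolding S_def g_def using k by auto
    have "g i = E i k" unfolding g_def tcol_def using i by simp
    moreover have "c' g + g i \<le> x i" using ub gS by blast
    ultimately have eq: "c' g + g i = x i" using c'ge[OF k(1)] k(2) unfolding g_def by linarith
    show "x i = Max ((\<lambda>g. c' g + g i) ` S)"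
      by (rule sym, rule Max_eqI) (use ub gS S eq in \<open>auto intro!: image_eqI[where x=g]\<close>)
  qed
  then show ?thesis unfolding tspan_def S_def using assms(4) S
    by (intro CollectI conjI exI[of _ "tcol n E ` K"] exI[of _ c']) (auto simp: S_def)
qed

lemma Emax: assumes "tidempotent n E" "i<n" "j<n"
  shows "E i j = Max ((\<lambda>k. E i k + E k j) ` {..<n})"
proof -
  from assms have "tmul n E E i j = E i j" unfolding tidempotent_def by simp
  thus ?thesis using assms(2,3) unfolding tmul_def by simp
qed

lemma Etri: assumes "tidempotent n E" "i<n" "k<n" "m<n"
  shows "E i k + E k m \<le> E i m"
proof -
  have "E i k + E k m \<le> Max ((\<lambda>k. E i k + E k m) ` {..<n})"
    by (rule Max_ge) (use assms in auto)
  thus ?thesis using Emax[OF assms(1,2,4)] by simp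
qed

lemma col_ge: assumes "tidempotent n E" "x \<in> colspace n E" "i<n" "k<n"
  shows "E i k + x k \<le> x i"
proof -
  from assms(2) obtain S c where S: "finite S" "S\<noteq>{}" "S \<subseteq> tcol n E ` {..<n}"
    "\<forall>i<n. x i = Max ((\<lambda>g. c g + g i) ` S)" unfolding colspace_def tspan_def by auto
  have "x k \<in> (\<lambda>g. c g + g k) ` S" using S(4) assms(4) Max_in[of "(\<lambda>g. c g + g k) ` S"] S(1,2) by auto
  then obtain g where g: "g\<in>S" "x k = c g + g k" by auto
  then obtain m where m: "m<n" "g = tcol n E m" using S(3) by auto
  have "c g + g i \<le> Max ((\<lambda>g. c g + g i) ` S)" by (rule Max_ge) (use S(1) g(1) in auto)
  hence 1: "c g + g i \<le> x i" using S(4) assms(3) by simp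
  have 2: "E i k + E k m \<le> E i m" using Etri assms m by blast
  have "g i = E i m" "g k = E k m" using m assms(3,4) unfolding tcol_def by auto
  thus ?thesis using 1 2 g(2) by linarith
qed

lemma no_red:
  assumes "trank n E = n" "n \<ge> 1" "j < n" "tcol n E j \<in> tspan n (tcol n E ` ({..<n} - {j}))"
  shows False
proof -
  let ?G = "tcol n E ` ({..<n} - {j})"
  have tv: "\<And>k. tcol n E k \<in> tvecs n" unfolding tcol_def tvecs_def by auto
  have cols: "tcol n E ` {..<n} \<subseteq> tspan n ?G"
  proof
    fix y assume "y \<in> tcol n E ` {..<n}"
    then obtain k where k: "k<n" "y = tcol n E k" by auto
    show "y \<in> tspan n ?G"
    proof (cases "k = j")
      case True thus ?thesis using assms k by simp
    next
      case False thus ?thesis using k tv by (intro tspan_gen) auto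
    qed
  qed
  have "colspace n E \<subseteq> tspan n ?G"
  proof
    fix x assume "x \<in> colspace n E"
    hence "x \<in> tspan n (tspan n ?G)" using tspan_mono[OF cols] unfolding colspace_def by (rule subsetD[rotated])
    thus "x \<in> tspan n ?G" by (rule tspan_trans)
  qed
  moreover have "tspan n ?G \<subseteq> colspace n E" unfolding colspace_def by (rule tspan_mono) auto
  ultimately have eq: "tspan n ?G = colspace n E" by (rule subset_antisym[rotated])
  have fin: "finite ?G" by simp
  have "card ?G \<le> card ({..<n} - {j})" by (rule card_image_le) simp
  also have "\<dots> = n - 1" using assms by simp
  finally have cle: "card ?G \<le> n - 1" .
  have sub: "?G \<subseteq> tvecs n" using tv by auto
  have "trank n E \<le> card ?G" unfolding trank_def
    by (rule Least_le) (rule exI[of _ ?G], use fin eq sub in auto)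
  thus False using cle assms by linarith
qed

lemma diag: assumes "tidempotent n E" "trank n E = n" "n \<ge> 1" "j < n"
  shows "E j j = 0"
proof (rule ccontr)
  assume ne: "E j j \<noteq> 0"
  have "E j j + E j j \<le> E j j" using Etri[OF assms(1) assms(4) assms(4) assms(4)] .
  hence neg: "E j j < 0" using ne by simp
  show False
  proof (cases "n = 1")
    case True
    hence "j = 0" using assms by simp
    have "E j j = Max ((\<lambda>k. E j k + E k j) ` {..<n})" using Emax[OF assms(1,4,4)] .
    moreover have "Max ((\<lambda>k. E j k + E k j) ` {..<n}) = E j j + E j j"
      using True \<open>j = 0\<close> by (simp add: lessThan_Suc)
    ultimately have "E j j = E j j + E j j" by linarith
    thus False using neg by simp
  next
    case False
    hence n2: "n \<ge> 2" using assms by simp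
    define K where "K = {..<n} - {j}"
    have Kne: "K \<noteq> {}"
    proof (cases "j = 0")
      case True
      hence "1 \<in> K" using n2 unfolding K_def by simp
      thus ?thesis by blast
    next
      case False
      hence "0 \<in> K" using n2 unfolding K_def by simp
      thus ?thesis by blast
    qed
    have "tcol n E j \<in> tspan n (tcol n E ` K)"
    proof (rule idx_span[where c = "\<lambda>k. E k j"])
      show "finite K" "K \<noteq> {}" "K \<subseteq> {..<n}" using Kne unfolding K_def by auto
      show "tcol n E j \<in> tvecs n" unfolding tcol_def tvecs_def by auto
      fix i assume i: "i < n"
      have "Max ((\<lambda>k. E i k + E k j) ` {..<n}) \<in> (\<lambda>k. E i k + E k j) ` {..<n}"
        by (rule Max_in) (use i in auto)
      hence "E i j \<in> (\<lambda>k. E i k + E k j) ` {..<n}"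
        using Emax[OF assms(1) i assms(4)] by simp
      then obtain k where k: "k<n" "E i j = E i k + E k j" by auto
      have "k \<noteq> j" using k neg by auto
      hence kK: "k \<in> K" using k unfolding K_def by auto
      have ub: "\<forall>y\<in>(\<lambda>k. E k j + E i k) ` K. y \<le> E i j"
      proof
        fix y assume "y \<in> (\<lambda>k. E k j + E i k) ` K"
        then obtain k' where k': "k' \<in> K" "y = E k' j + E i k'" by blast
        have "k' < n" using k'(1) unfolding K_def by simp
        from Etri[OF assms(1) i this assms(4)] k'(2) show "y \<le> E i j" by simp
      qed
      have "Max ((\<lambda>k. E k j + E i k) ` K) = E i j"
        by (rule Max_eqI) (use ub kK k \<open>finite K\<close> in \<open>auto intro!: image_eqI[where x=k]\<close>)
      thus "tcol n E j i = Max ((\<lambda>k. E k j + E i k) ` K)" using i unfolding tcol_def by simp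
    qed
    thus False unfolding K_def by (rule no_red[OF assms(2,3,4)])
  qed
qed


lemma sum_ind:
  assumes "a < n"
  shows "(\<Sum>j<n-1. (if j = a then 1 else 0) * projcoord n x j) = x a - x (n-1)"
proof -
  have "(\<Sum>j<n-1. (if j = a then 1 else 0) * projcoord n x j) = (\<Sum>j<n-1. if j = a then projcoord n x j else 0)"
    by (rule sum.cong) auto
  also have "\<dots> = (if a \<in> {..<n-1} then projcoord n x a else 0)" by (rule sum.delta) simp
  also have "\<dots> = x a - x (n-1)"
  proof (cases "a < n - 1")
    case True thus ?thesis unfolding projcoord_def by simp
  next
    case False hence "a = n - 1" using assms by simp
    thus ?thesis using False by simp
  qed
  finally show ?thesis .
qed

theorem corollary7p5:
  fixes n :: nat and E A :: "nat \<Rightarrow> nat \<Rightarrow> real"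
  assumes "n \<ge> 1"
    and "tidempotent n E"
    and "trank n E = n"
    and "A \<in> tmats n"
    and "greenH n A E"
  shows "(\<forall>x \<in> colspace n E. tact n A x \<in> colspace n E) \<and>
    (\<exists>(M :: nat \<Rightarrow> nat \<Rightarrow> real) (b :: nat \<Rightarrow> real).
       \<forall>x \<in> colspace n E. \<forall>i < n - 1.
         projcoord n (tact n A x) i = (\<Sum>j < n - 1. M i j * projcoord n x j) + b i)"
proof -
  note idem = assms(2)
  have dg: "E j j = 0" if "j<n" for j using diag[OF idem assms(3,1) that] .
  have tri: "E i k + E k m \<le> E i m" if "i<n" "k<n" "m<n" for i k m using Etri[OF idem that] .
  have gL: "left_ideal1 n A = left_ideal1 n E" and gR: "right_ideal1 n A = right_ideal1 n E"
    using assms(5) unfolding greenH_def greenL_def greenR_def by auto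
  have "A \<in> left_ideal1 n A" unfolding left_ideal1_def by simp
  hence "A \<in> left_ideal1 n E" using gL by simp
  hence A_L: "A = E \<or> (\<exists>s. A = tmul n s E)" unfolding left_ideal1_def by blast
  have "E \<in> left_ideal1 n E" unfolding left_ideal1_def by simp
  hence "E \<in> left_ideal1 n A" using gL by simp
  hence E_L: "E = A \<or> (\<exists>t. E = tmul n t A)" unfolding left_ideal1_def by blast
  have "A \<in> right_ideal1 n A" unfolding right_ideal1_def by simp
  hence "A \<in> right_ideal1 n E" using gR by simp
  hence A_R: "A = E \<or> (\<exists>s. A = tmul n E s)" unfolding right_ideal1_def by blast
  have rowA: "A k m + E m l \<le> A k l" if km: "k<n" "m<n" "l<n" for k m l
    using A_L
  proof
    assume "A = E" thus ?thesis using tri[OF km] by simp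
  next
    assume "\<exists>s. A = tmul n s E"
    then obtain s where s: "A = tmul n s E" by blast
    have Am: "A k m = Max ((\<lambda>p. s k p + E p m) ` {..<n})" using s km unfolding tmul_def by simp
    have Al: "A k l = Max ((\<lambda>p. s k p + E p l) ` {..<n})" using s km unfolding tmul_def by simp
    have "Max ((\<lambda>p. s k p + E p m) ` {..<n}) \<in> (\<lambda>p. s k p + E p m) ` {..<n}"
      by (rule Max_in) (use km in auto)
    then obtain p where p: "p<n" "A k m = s k p + E p m" using Am by auto
    have "s k p + E p l \<le> Max ((\<lambda>p. s k p + E p l) ` {..<n})" by (rule Max_ge) (use p in auto)
    with tri[OF p(1) km(2,3)] p(2) Al show ?thesis by linarith
  qed
  have colA: "E i k + A k l \<le> A i l" if ikl: "i<n" "k<n" "l<n" for i k l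
    using A_R
  proof
    assume "A = E" thus ?thesis using tri[OF ikl] by simp
  next
    assume "\<exists>s. A = tmul n E s"
    then obtain s where s: "A = tmul n E s" by blast
    have Ak: "A k l = Max ((\<lambda>p. E k p + s p l) ` {..<n})" using s ikl unfolding tmul_def by simp
    have Ai: "A i l = Max ((\<lambda>p. E i p + s p l) ` {..<n})" using s ikl unfolding tmul_def by simp
    have "Max ((\<lambda>p. E k p + s p l) ` {..<n}) \<in> (\<lambda>p. E k p + s p l) ` {..<n}"
      by (rule Max_in) (use ikl in auto)
    then obtain p where p: "p<n" "A k l = E k p + s p l" using Ak by auto
    have "E i p + s p l \<le> Max ((\<lambda>p. E i p + s p l) ` {..<n})" by (rule Max_ge) (use p in auto)
    with tri[OF ikl(1,2) p(1)] p(2) Ai show ?thesis by linarith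
  qed
  have rowsE: "\<exists>k<n. \<forall>l<n. A k l = A k i + E i l" if i: "i<n" for i
    using E_L
  proof
    assume "E = A" thus ?thesis using i dg[OF i] by (intro exI[of _ i]) simp
  next
    assume "\<exists>t. E = tmul n t A"
    then obtain t where t: "E = tmul n t A" by blast
    have Eil: "E i l = Max ((\<lambda>p. t i p + A p l) ` {..<n})" if "l<n" for l
      using t i that unfolding tmul_def by (simp add: fun_eq_iff)
    have "Max ((\<lambda>p. t i p + A p i) ` {..<n}) \<in> (\<lambda>p. t i p + A p i) ` {..<n}"
      by (rule Max_in) (use i in auto)
    then obtain k where k: "k<n" "E i i = t i k + A k i" using Eil[OF i] by auto
    have "\<forall>l<n. A k l = A k i + E i l"
    proof (intro allI impI)
      fix l assume l: "l<n"
      have "t i k + A k l \<le> Max ((\<lambda>p. t i p + A p l) ` {..<n})" by (rule Max_ge) (use k in auto)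
      hence "t i k + A k l \<le> E i l" using Eil[OF l] by simp
      moreover have "A k i + E i l \<le> A k l" using rowA[OF k(1) i l] .
      ultimately show "A k l = A k i + E i l" using k(2) dg[OF i] by linarith
    qed
    thus ?thesis using k(1) by blast
  qed
  have "\<forall>i\<in>{..<n}. \<exists>k. k < n \<and> (\<forall>l<n. A k l = A k i + E i l)"
  proof
    fix i assume "i \<in> {..<n}"
    hence "i < n" by simp
    from rowsE[OF this] show "\<exists>k. k < n \<and> (\<forall>l<n. A k l = A k i + E i l)" by blast
  qed
  then obtain \<rho> where rho: "\<forall>i\<in>{..<n}. \<rho> i < n \<and> (\<forall>l<n. A (\<rho> i) l = A (\<rho> i) i + E i l)"
    by (rule bchoice[elim_format]) blast
  have inj: "inj_on \<rho> {..<n}"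
  proof (rule inj_onI, rule ccontr)
    fix i i' assume i: "i \<in> {..<n}" and i': "i' \<in> {..<n}" and eq: "\<rho> i = \<rho> i'" and ne: "i \<noteq> i'"
    define k where "k = \<rho> i"
    have "\<forall>l<n. A (\<rho> i) l = A (\<rho> i) i + E i l" using rho i by blast
    hence r1: "\<forall>l<n. A k l = A k i + E i l" unfolding k_def .
    have "\<forall>l<n. A (\<rho> i') l = A (\<rho> i') i' + E i' l" using rho i' by blast
    hence r2: "\<forall>l<n. A k l = A k i' + E i' l" unfolding k_def eq .
    have in_: "i < n" "i' < n" using i i' by auto
    have "A k i = A k i' + E i' i" using r2 in_ by blast
    moreover have "A k i' = A k i + E i i'" using r1 in_ by blast
    ultimately have z: "E i i' + E i' i = 0" by linarith
    have colq: "E l i = E i' i + E l i'" if l: "l<n" for l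
      using tri[OF l in_(2) in_(1)] tri[OF l in_(1) in_(2)] z by linarith
    have "tcol n E i \<in> tspan n (tcol n E ` {i'})"
    proof (rule idx_span[where c = "\<lambda>_. E i' i"])
      show "finite {i'}" "{i'} \<noteq> {}" "{i'} \<subseteq> {..<n}" using in_ by auto
      show "tcol n E i \<in> tvecs n" unfolding tcol_def tvecs_def by auto
      fix l assume l: "l < n"
      have "Max ((\<lambda>k. E i' i + E l k) ` {i'}) = E i' i + E l i'" by simp
      moreover have "tcol n E i l = E l i" using l unfolding tcol_def by simp
      ultimately show "tcol n E i l = Max ((\<lambda>k. E i' i + E l k) ` {i'})" using colq[OF l] by linarith
    qed
    moreover have "tspan n (tcol n E ` {i'}) \<subseteq> tspan n (tcol n E ` ({..<n} - {i}))"
      by (rule tspan_mono) (use in_ ne in auto)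
    ultimately have "tcol n E i \<in> tspan n (tcol n E ` ({..<n} - {i}))" by (rule subsetD[rotated])
    thus False by (rule no_red[OF assms(3,1) in_(1)])
  qed
  have surj: "\<rho> ` {..<n} = {..<n}" by (rule endo_inj_surj) (use rho inj in auto)
  have "\<forall>k\<in>{..<n}. \<exists>i. i < n \<and> \<rho> i = k"
  proof
    fix k assume "k \<in> {..<n}"
    hence "k \<in> \<rho> ` {..<n}" using surj by simp
    thus "\<exists>i. i < n \<and> \<rho> i = k" by auto
  qed
  then obtain \<tau> where tau: "\<forall>k\<in>{..<n}. \<tau> k < n \<and> \<rho> (\<tau> k) = k" by (rule bchoice[elim_format]) blast
  define r where "r k = A k (\<tau> k)" for k
  have tlt: "\<tau> k < n" if "k<n" for k using tau that by auto
  have rowAt: "A k l = r k + E (\<tau> k) l" if "k<n" "l<n" for k l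
  proof -
    have "\<rho> (\<tau> k) = k" using tau that by auto
    moreover have "\<tau> k \<in> {..<n}" using tlt[OF that(1)] by simp
    hence "\<forall>l<n. A (\<rho> (\<tau> k)) l = A (\<rho> (\<tau> k)) (\<tau> k) + E (\<tau> k) l" using rho by blast
    ultimately have "\<forall>l<n. A k l = A k (\<tau> k) + E (\<tau> k) l" by (simp only:)
    thus ?thesis using that(2) unfolding r_def by blast
  qed
  have act: "tact n A x k = r k + x (\<tau> k)" if x: "x \<in> colspace n E" and k: "k<n" for x k
  proof -
    have "Max ((\<lambda>l. A k l + x l) ` {..<n}) = r k + x (\<tau> k)"
    proof (rule Max_eqI)
      show "finite ((\<lambda>l. A k l + x l) ` {..<n})" by simp
      fix y assume "y \<in> (\<lambda>l. A k l + x l) ` {..<n}"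
      then obtain l where l: "l<n" "y = A k l + x l" by auto
      have "E (\<tau> k) l + x l \<le> x (\<tau> k)" by (rule col_ge[OF idem x tlt[OF k] l(1)])
      thus "y \<le> r k + x (\<tau> k)" using rowAt[OF k l(1)] l(2) by linarith
    next
      show "r k + x (\<tau> k) \<in> (\<lambda>l. A k l + x l) ` {..<n}"
        using tlt[OF k] unfolding r_def by auto
    qed
    thus ?thesis unfolding tact_def using k by simp
  qed
  have part1: "\<forall>x \<in> colspace n E. tact n A x \<in> colspace n E"
  proof
    fix x assume x: "x \<in> colspace n E"
    define y where "y = tact n A x"
    have yge: "A i l + x l \<le> y i" if "i<n" "l<n" for i l
    proof -
      have "A i l + x l \<le> Max ((\<lambda>l. A i l + x l) ` {..<n})" by (rule Max_ge) (use that in auto)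
      thus ?thesis unfolding y_def tact_def using that by simp
    qed
    have "y \<in> tspan n (tcol n E ` {..<n})"
    proof (rule idx_span[where c = y])
      show "finite {..<n}" "{..<n} \<subseteq> {..<n}" by auto
      have "0 \<in> {..<n}" using assms(1) by simp
      thus "{..<n} \<noteq> {}" by blast
      show "y \<in> tvecs n" unfolding y_def tact_def tvecs_def by auto
      fix i assume i: "i<n"
      have "Max ((\<lambda>k. y k + E i k) ` {..<n}) = y i"
      proof (rule Max_eqI)
        show "finite ((\<lambda>k. y k + E i k) ` {..<n})" by simp
        fix z assume "z \<in> (\<lambda>k. y k + E i k) ` {..<n}"
        then obtain k where k: "k<n" "z = y k + E i k" by auto
        have "y k = A k (\<tau> k) + x (\<tau> k)" using act[OF x k(1)] unfolding y_def r_def by simp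
        moreover have "E i k + A k (\<tau> k) \<le> A i (\<tau> k)" by (rule colA[OF i k(1) tlt[OF k(1)]])
        moreover have "A i (\<tau> k) + x (\<tau> k) \<le> y i" by (rule yge[OF i tlt[OF k(1)]])
        ultimately show "z \<le> y i" using k(2) by linarith
      next
        show "y i \<in> (\<lambda>k. y k + E i k) ` {..<n}" using i dg[OF i] by (auto intro!: image_eqI[where x=i])
      qed
      thus "y i = Max ((\<lambda>k. y k + E i k) ` {..<n})" by simp
    qed
    thus "tact n A x \<in> colspace n E" unfolding y_def colspace_def .
  qed
  define M where "M i j = (if j = \<tau> i then 1 else 0) - (if j = \<tau> (n-1) then 1 else (0::real))" for i j
  define b where "b i = r i - r (n-1)" for i
  have part2: "\<forall>x \<in> colspace n E. \<forall>i < n - 1.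
         projcoord n (tact n A x) i = (\<Sum>j < n - 1. M i j * projcoord n x j) + b i"
  proof (intro ballI allI impI)
    fix x i assume x: "x \<in> colspace n E" and i: "i < n - 1"
    have iN: "i < n" and lN: "n - 1 < n" using i assms(1) by auto
    have "(\<Sum>j < n - 1. M i j * projcoord n x j) =
      (\<Sum>j < n - 1. (if j = \<tau> i then 1 else 0) * projcoord n x j) - (\<Sum>j < n - 1. (if j = \<tau> (n-1) then 1 else 0) * projcoord n x j)"
      unfolding M_def left_diff_distrib by (rule sum_subtractf)
    also have "\<dots> = (x (\<tau> i) - x (n-1)) - (x (\<tau> (n-1)) - x (n-1))"
      using sum_ind[OF tlt[OF iN]] sum_ind[OF tlt[OF lN]] by simp
    finally have S: "(\<Sum>j < n - 1. M i j * projcoord n x j) = x (\<tau> i) - x (\<tau> (n-1))" by simp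
    have "projcoord n (tact n A x) i = tact n A x i - tact n A x (n-1)" unfolding projcoord_def using i by simp
    also have "\<dots> = (r i + x (\<tau> i)) - (r (n-1) + x (\<tau> (n-1)))" using act[OF x iN] act[OF x lN] by simp
    finally show "projcoord n (tact n A x) i = (\<Sum>j < n - 1. M i j * projcoord n x j) + b i"
      using S unfolding b_def by simp
  qed
  show ?thesis using part1 part2 by blast
qed

end
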